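(* Let $X$ be a set, $B=(B,+,0)$ a unitary magma, and let $(A,k,q,s,p)$ and $(A',k',q',s',p')$ be two retraction points from $X$ to $B$. If there exists a morphism of unitary magmas $\alpha\colon A\to A'$ such that $\alpha k=k'$, $\alpha s=s'$ and $q'\alpha=q$, then $\alpha$ is an isomorphism.
   Context: A unitary magma is a set with a binary operation $+$ and an element $0$ with $b+0=b=0+b$ for all $b$; morphisms preserve $+$ and $0$. Given a set $X$ and a unitary magma $B$, a retraction point from $X$ to $B$ is a tuple $(A,k,q,s,p)$ where $A=(A,+,0)$ is a unitary magma, $k\colon X\to A$ and $q\colon A\to X$ are maps, $s\colon B\to A$ and $p\colon A\to B$ are morphisms of unitary magmas, and $p(s(b))=b$, $q(k(x))=x$, $p(k(x))=0$, $q(s(b))=q(0)$, and $k(q(a))+s(p(a))=a$ for all $x\in X$, $b\in B$, $a\in A$. *)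

theory Defs
  imports Main
begin

definition unitary_magma :: "'a set \<Rightarrow> ('a \<Rightarrow> 'a \<Rightarrow> 'a) \<Rightarrow> 'a \<Rightarrow> bool" where
  "unitary_magma M add z \<longleftrightarrow>
     z \<in> M \<and> (\<forall>a\<in>M. \<forall>b\<in>M. add a b \<in> M) \<and> (\<forall>b\<in>M. add b z = b \<and> add z b = b)"

definition um_hom :: "'a set \<Rightarrow> ('a \<Rightarrow> 'a \<Rightarrow> 'a) \<Rightarrow> 'a \<Rightarrow> 'b set \<Rightarrow> ('b \<Rightarrow> 'b \<Rightarrow> 'b) \<Rightarrow> 'b
                       \<Rightarrow> ('a \<Rightarrow> 'b) \<Rightarrow> bool" where
  "um_hom M addM zM N addN zN f \<longleftrightarrow>
     (\<forall>a\<in>M. f a \<in> N) \<and> (\<forall>a\<in>M. \<forall>b\<in>M. f (addM a b) = addN (f a) (f b)) \<and> f zM = zN"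

definition um_iso :: "'a set \<Rightarrow> ('a \<Rightarrow> 'a \<Rightarrow> 'a) \<Rightarrow> 'a \<Rightarrow> 'b set \<Rightarrow> ('b \<Rightarrow> 'b \<Rightarrow> 'b) \<Rightarrow> 'b
                       \<Rightarrow> ('a \<Rightarrow> 'b) \<Rightarrow> bool" where
  "um_iso M addM zM N addN zN f \<longleftrightarrow>
     um_hom M addM zM N addN zN f \<and>
     (\<exists>g. um_hom N addN zN M addM zM g \<and> (\<forall>a\<in>M. g (f a) = a) \<and> (\<forall>b\<in>N. f (g b) = b))"

definition retraction_point ::
  "'x set \<Rightarrow> 'b set \<Rightarrow> ('b \<Rightarrow> 'b \<Rightarrow> 'b) \<Rightarrow> 'b \<Rightarrow>
   'a set \<Rightarrow> ('a \<Rightarrow> 'a \<Rightarrow> 'a) \<Rightarrow> 'a \<Rightarrow>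
   ('x \<Rightarrow> 'a) \<Rightarrow> ('a \<Rightarrow> 'x) \<Rightarrow> ('b \<Rightarrow> 'a) \<Rightarrow> ('a \<Rightarrow> 'b) \<Rightarrow> bool" where
  "retraction_point X B addB zB A addA zA k q s p \<longleftrightarrow>
     unitary_magma A addA zA \<and>
     (\<forall>x\<in>X. k x \<in> A) \<and> (\<forall>a\<in>A. q a \<in> X) \<and>
     um_hom B addB zB A addA zA s \<and> um_hom A addA zA B addB zB p \<and>
     (\<forall>b\<in>B. p (s b) = b) \<and> (\<forall>x\<in>X. q (k x) = x) \<and> (\<forall>x\<in>X. p (k x) = zB) \<and>
     (\<forall>b\<in>B. q (s b) = q zA) \<and> (\<forall>a\<in>A. addA (k (q a)) (s (p a)) = a)"

end

theory Submission
  imports Defs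
begin

theorem proposition2p3:
  fixes X :: "'x set" and B :: "'b set" and addB :: "'b \<Rightarrow> 'b \<Rightarrow> 'b" and zB :: 'b
    and A :: "'a set" and addA :: "'a \<Rightarrow> 'a \<Rightarrow> 'a" and zA :: 'a
    and k :: "'x \<Rightarrow> 'a" and q :: "'a \<Rightarrow> 'x" and s :: "'b \<Rightarrow> 'a" and p :: "'a \<Rightarrow> 'b"
    and A' :: "'c set" and addA' :: "'c \<Rightarrow> 'c \<Rightarrow> 'c" and zA' :: 'c
    and k' :: "'x \<Rightarrow> 'c" and q' :: "'c \<Rightarrow> 'x" and s' :: "'b \<Rightarrow> 'c" and p' :: "'c \<Rightarrow> 'b"
    and \<alpha> :: "'a \<Rightarrow> 'c"
  assumes "unitary_magma B addB zB"
    and "retraction_point X B addB zB A addA zA k q s p"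
    and "retraction_point X B addB zB A' addA' zA' k' q' s' p'"
    and "um_hom A addA zA A' addA' zA' \<alpha>"
    and "\<forall>x\<in>X. \<alpha> (k x) = k' x"
    and "\<forall>b\<in>B. \<alpha> (s b) = s' b"
    and "\<forall>a\<in>A. q' (\<alpha> a) = q a"
  shows "um_iso A addA zA A' addA' zA' \<alpha>"
proof -
  note R = assms(2)[unfolded retraction_point_def um_hom_def unitary_magma_def]
  note R' = assms(3)[unfolded retraction_point_def um_hom_def unitary_magma_def]
  note H = assms(4)[unfolded um_hom_def]
  define g where "g c = addA (k (q' c)) (s (p' c))" for c
  have pa: "p' (\<alpha> a) = p a" if a: "a \<in> A" for a
  proof -
    have qa: "q a \<in> X" and pb: "p a \<in> B" using R a by auto
    have "\<alpha> a = \<alpha> (addA (k (q a)) (s (p a)))" using R a by auto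
    also have "\<dots> = addA' (k' (q a)) (s' (p a))" using H R qa pb assms(5,6) by auto
    finally have "p' (\<alpha> a) = addB (p' (k' (q a))) (p' (s' (p a)))" using R' qa pb by auto
    also have "\<dots> = addB zB (p a)" using R' qa pb by auto
    also have "\<dots> = p a" using assms(1) pb unfolding unitary_magma_def by auto
    finally show ?thesis .
  qed
  have gA: "g c \<in> A" if "c \<in> A'" for c using R R' that unfolding g_def by auto
  have ga: "g (\<alpha> a) = a" if a: "a \<in> A" for a
    using R a pa assms(7) unfolding g_def by auto
  have ag: "\<alpha> (g c) = c" if c: "c \<in> A'" for c
  proof -
    have "q' c \<in> X" "p' c \<in> B" using R' c by auto
    then have "\<alpha> (g c) = addA' (k' (q' c)) (s' (p' c))" unfolding g_def using H R assms(5,6) by auto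
    then show ?thesis using R' c by auto
  qed
  have "um_hom A' addA' zA' A addA zA g"
    unfolding um_hom_def
  proof (intro conjI ballI)
    fix c d assume c: "c \<in> A'" and d: "d \<in> A'"
    have "addA' c d = \<alpha> (addA (g c) (g d))" using H gA c d ag by auto
    then show "g (addA' c d) = addA (g c) (g d)" using ga R gA c d by auto
  next
    show "g zA' = zA" using ga H R by metis
  qed (use gA in auto)
  then show ?thesis unfolding um_iso_def using assms(4) ga ag by blast
qed

end
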